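(* Let $\mathcal{U}=\begin{pmatrix}\mathcal{A}&\mathcal{M}\\ \mathcal{N}&\mathcal{B}\end{pmatrix}$ be a generalized matrix ring in which $\mathcal{A}$ and $\mathcal{B}$ are 2-torsion free. Let $\phi:\mathcal{U}\to\mathcal{U}$ be an additive mapping satisfying condition $(\mathbb{P})$, i.e. for all $U,V\in\mathcal{U}$ with $UV=VU=0$ one has $\phi(U)\circ V+U\circ\phi(V)=0$. Then there exist a Jordan derivation $\delta:\mathcal{U}\to\mathcal{U}$ and a multiplier $\eta:\mathcal{U}\to\mathcal{U}$ such that $\phi=\delta+\eta$. Moreover, if $\phi(I)=0$, then $\phi$ is a Jordan derivation.
   Context: A generalized matrix ring is built from: unital rings $\mathcal{A},\mathcal{B}$; a unital $(\mathcal{A},\mathcal{B})$-bimodule $\mathcal{M}$ which is faithful on both sides (if $A\in\mathcal{A}$ and $A\mathcal{M}=\{0\}$ then $A=0$; if $B\in\mathcal{B}$ and $\mathcal{M}B=\{0\}$ then $B=0$); a unital $(\mathcal{B},\mathcal{A})$-bimodule $\mathcal{N}$ (not necessarily faithful); and bimodule homomorphisms $\sigma:\mathcal{M}\otimes_{\mathcal{B}}\mathcal{N}\to\mathcal{A}$, $\rho:\mathcal{N}\otimes_{\mathcal{A}}\mathcal{M}\to\mathcal{B}$, written $MN=\sigma(M\otimes N)$, $NM=\rho(N\otimes M)$, satisfying $(MN)M'=M(NM')$ and $(NM)N'=N(MN')$ for all $M,M'\in\mathcal{M}$, $N,N'\in\mathcal{N}$. Then $\mathcal{U}$ is the set of matrices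 $\begin{pmatrix}A&M\\N&B\end{pmatrix}$ ($A\in\mathcal{A},M\in\mathcal{M},N\in\mathcal{N},B\in\mathcal{B}$) with the usual matrix addition and multiplication; it has identity $I$. A ring is 2-torsion free if $2X=0$ implies $X=0$. The Jordan product is $X\circ Y=XY+YX$. For a unital ring $\mathcal{R}$: an additive map $\delta:\mathcal{R}\to\mathcal{R}$ is a Jordan derivation if $\delta(X^2)=\delta(X)X+X\delta(X)$ for all $X$; an additive map $\eta:\mathcal{R}\to\mathcal{R}$ is a multiplier if $\eta(X)=\eta(I)X=X\eta(I)$ for all $X\in\mathcal{R}$. *)

theory Defs
  imports Main "HOL-Library.Product_Plus"
begin

text \<open>Data of a generalized matrix ring: the ring A is the type 'a, B is 'b,
  the bimodules M, N are the types 'm, 'n; the record holds the module actions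
  and the pairings sigma : M x N -> A, rho : N x M -> B.\<close>

record ('a, 'm, 'n, 'b) gmr =
  actAM :: "'a \<Rightarrow> 'm \<Rightarrow> 'm"
  actMB :: "'m \<Rightarrow> 'b \<Rightarrow> 'm"
  actBN :: "'b \<Rightarrow> 'n \<Rightarrow> 'n"
  actNA :: "'n \<Rightarrow> 'a \<Rightarrow> 'n"
  sig   :: "'m \<Rightarrow> 'n \<Rightarrow> 'a"
  rho   :: "'n \<Rightarrow> 'm \<Rightarrow> 'b"

definition gen_matrix_ring ::
  "('a::ring_1, 'm::ab_group_add, 'n::ab_group_add, 'b::ring_1) gmr \<Rightarrow> bool" where
  "gen_matrix_ring R \<longleftrightarrow>
     \<comment> \<open>M is a unital (A,B)-bimodule\<close>
     (\<forall>a a' m. actAM R (a + a') m = actAM R a m + actAM R a' m) \<and>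
     (\<forall>a m m'. actAM R a (m + m') = actAM R a m + actAM R a m') \<and>
     (\<forall>a a' m. actAM R (a * a') m = actAM R a (actAM R a' m)) \<and>
     (\<forall>m. actAM R 1 m = m) \<and>
     (\<forall>m b b'. actMB R m (b + b') = actMB R m b + actMB R m b') \<and>
     (\<forall>m m' b. actMB R (m + m') b = actMB R m b + actMB R m' b) \<and>
     (\<forall>m b b'. actMB R m (b * b') = actMB R (actMB R m b) b') \<and>
     (\<forall>m. actMB R m 1 = m) \<and>
     (\<forall>a m b. actAM R a (actMB R m b) = actMB R (actAM R a m) b) \<and>
     \<comment> \<open>N is a unital (B,A)-bimodule\<close>
     (\<forall>b b' n. actBN R (b + b') n = actBN R b n + actBN R b' n) \<and>
     (\<forall>b n n'. actBN R b (n + n') = actBN R b n + actBN R b n') \<and>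
     (\<forall>b b' n. actBN R (b * b') n = actBN R b (actBN R b' n)) \<and>
     (\<forall>n. actBN R 1 n = n) \<and>
     (\<forall>n a a'. actNA R n (a + a') = actNA R n a + actNA R n a') \<and>
     (\<forall>n n' a. actNA R (n + n') a = actNA R n a + actNA R n' a) \<and>
     (\<forall>n a a'. actNA R n (a * a') = actNA R (actNA R n a) a') \<and>
     (\<forall>n. actNA R n 1 = n) \<and>
     (\<forall>b n a. actBN R b (actNA R n a) = actNA R (actBN R b n) a) \<and>
     \<comment> \<open>M faithful on both sides\<close>
     (\<forall>a. (\<forall>m. actAM R a m = 0) \<longrightarrow> a = 0) \<and>
     (\<forall>b. (\<forall>m. actMB R m b = 0) \<longrightarrow> b = 0) \<and>
     \<comment> \<open>sigma : M \<otimes>_B N \<rightarrow> A is an (A,A)-bimodule homomorphism\<close>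
     (\<forall>m m' n. sig R (m + m') n = sig R m n + sig R m' n) \<and>
     (\<forall>m n n'. sig R m (n + n') = sig R m n + sig R m n') \<and>
     (\<forall>m b n. sig R (actMB R m b) n = sig R m (actBN R b n)) \<and>
     (\<forall>a m n. sig R (actAM R a m) n = a * sig R m n) \<and>
     (\<forall>m n a. sig R m (actNA R n a) = sig R m n * a) \<and>
     \<comment> \<open>rho : N \<otimes>_A M \<rightarrow> B is a (B,B)-bimodule homomorphism\<close>
     (\<forall>n n' m. rho R (n + n') m = rho R n m + rho R n' m) \<and>
     (\<forall>n m m'. rho R n (m + m') = rho R n m + rho R n m') \<and>
     (\<forall>n a m. rho R (actNA R n a) m = rho R n (actAM R a m)) \<and>
     (\<forall>b n m. rho R (actBN R b n) m = b * rho R n m) \<and>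
     (\<forall>n m b. rho R n (actMB R m b) = rho R n m * b) \<and>
     \<comment> \<open>(MN)M' = M(NM') and (NM)N' = N(MN')\<close>
     (\<forall>m n m'. actAM R (sig R m n) m' = actMB R m (rho R n m')) \<and>
     (\<forall>n m n'. actBN R (rho R n m) n' = actNA R n (sig R m n'))"

text \<open>Elements of U are quadruples (A, M, N, B), i.e. matrices [[A, M], [N, B]];
  addition is componentwise (product instance of ab_group_add).\<close>

fun gm_mult :: "('a::ring_1, 'm::ab_group_add, 'n::ab_group_add, 'b::ring_1) gmr \<Rightarrow>
    'a \<times> 'm \<times> 'n \<times> 'b \<Rightarrow> 'a \<times> 'm \<times> 'n \<times> 'b \<Rightarrow> 'a \<times> 'm \<times> 'n \<times> 'b" where
  "gm_mult R (a, m, n, b) (a', m', n', b') =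
     (a * a' + sig R m n',
      actAM R a m' + actMB R m b',
      actNA R n a' + actBN R b n',
      rho R n m' + b * b')"

definition gm_one :: "'a::ring_1 \<times> 'm::ab_group_add \<times> 'n::ab_group_add \<times> 'b::ring_1" where
  "gm_one = (1, 0, 0, 1)"

definition gm_jordan ::
  "('a::ring_1, 'm::ab_group_add, 'n::ab_group_add, 'b::ring_1) gmr \<Rightarrow>
    'a \<times> 'm \<times> 'n \<times> 'b \<Rightarrow> 'a \<times> 'm \<times> 'n \<times> 'b \<Rightarrow> 'a \<times> 'm \<times> 'n \<times> 'b" where
  "gm_jordan R X Y = gm_mult R X Y + gm_mult R Y X"

definition two_torsion_free :: "'r::ab_group_add itself \<Rightarrow> bool" where
  "two_torsion_free _ \<longleftrightarrow> (\<forall>x::'r. x + x = 0 \<longrightarrow> x = 0)"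

definition additive_map :: "('u::ab_group_add \<Rightarrow> 'u) \<Rightarrow> bool" where
  "additive_map f \<longleftrightarrow> (\<forall>x y. f (x + y) = f x + f y)"

definition jordan_derivation ::
  "('a::ring_1, 'm::ab_group_add, 'n::ab_group_add, 'b::ring_1) gmr \<Rightarrow>
    ('a \<times> 'm \<times> 'n \<times> 'b \<Rightarrow> 'a \<times> 'm \<times> 'n \<times> 'b) \<Rightarrow> bool" where
  "jordan_derivation R d \<longleftrightarrow> additive_map d \<and>
     (\<forall>X. d (gm_mult R X X) = gm_mult R (d X) X + gm_mult R X (d X))"

definition multiplier ::
  "('a::ring_1, 'm::ab_group_add, 'n::ab_group_add, 'b::ring_1) gmr \<Rightarrow>
    ('a \<times> 'm \<times> 'n \<times> 'b \<Rightarrow> 'a \<times> 'm \<times> 'n \<times> 'b) \<Rightarrow> bool" where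
  "multiplier R e \<longleftrightarrow> additive_map e \<and>
     (\<forall>X. e X = gm_mult R (e gm_one) X \<and> e X = gm_mult R X (e gm_one))"

definition condition_P ::
  "('a::ring_1, 'm::ab_group_add, 'n::ab_group_add, 'b::ring_1) gmr \<Rightarrow>
    ('a \<times> 'm \<times> 'n \<times> 'b \<Rightarrow> 'a \<times> 'm \<times> 'n \<times> 'b) \<Rightarrow> bool" where
  "condition_P R f \<longleftrightarrow> (\<forall>U V. gm_mult R U V = 0 \<and> gm_mult R V U = 0 \<longrightarrow>
       gm_jordan R (f U) V + gm_jordan R U (f V) = 0)"

end

theory Submission
  imports Defs
begin



lemma addhom:
  fixes f :: "'x::ab_group_add \<Rightarrow> 'y::ab_group_add"
  assumes a: "\<And>x y. f (x+y) = f x + f y"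
  shows "f 0 = 0" "f (-x) = - f x" "f (x - y) = f x - f y"
proof -
  have "f 0 = f 0 + f 0" using a[of 0 0] by simp
  then show z: "f 0 = 0" by simp
  have n: "f (-u) = - f u" for u
  proof -
    have "f (u + -u) = f u + f (-u)" by (rule a)
    then show ?thesis using z by (simp add: add_eq_0_iff)
  qed
  then show "f (-x) = - f x" .
  show "f (x - y) = f x - f y" using a[of x "-y"] n[of y] by simp
qed

locale gmc =
  fixes R :: "('a::ring_1, 'm::ab_group_add, 'n::ab_group_add, 'b::ring_1) gmr"
  assumes gmr: "gen_matrix_ring R"
begin

lemmas G = gmr[unfolded gen_matrix_ring_def]

lemma AM_addL[simp]: "actAM R (a + a') m = actAM R a m + actAM R a' m" using G[THEN conjunct1] by blast
lemma AM_addR[simp]: "actAM R a (m + m') = actAM R a m + actAM R a m'" using G[THEN conjunct2, THEN conjunct1] by blast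
lemma AM_mult[simp]: "actAM R (a * a') m = actAM R a (actAM R a' m)" using G[THEN conjunct2, THEN conjunct2, THEN conjunct1] by blast
lemma AM_one[simp]: "actAM R 1 m = m" using G[THEN conjunct2, THEN conjunct2, THEN conjunct2, THEN conjunct1] by blast
lemma MB_addR[simp]: "actMB R m (b + b') = actMB R m b + actMB R m b'" using G[THEN conjunct2, THEN conjunct2, THEN conjunct2, THEN conjunct2, THEN conjunct1] by blast
lemma MB_addL[simp]: "actMB R (m + m') b = actMB R m b + actMB R m' b" using G[THEN conjunct2, THEN conjunct2, THEN conjunct2, THEN conjunct2, THEN conjunct2, THEN conjunct1] by blast
lemma MB_mult[simp]: "actMB R m (b * b') = actMB R (actMB R m b) b'" using G[THEN conjunct2, THEN conjunct2, THEN conjunct2, THEN conjunct2, THEN conjunct2, THEN conjunct2, THEN conjunct1] by blast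
lemma MB_one[simp]: "actMB R m 1 = m" using G[THEN conjunct2, THEN conjunct2, THEN conjunct2, THEN conjunct2, THEN conjunct2, THEN conjunct2, THEN conjunct2, THEN conjunct1] by blast
lemma AMB[simp]: "actAM R a (actMB R m b) = actMB R (actAM R a m) b" using G[THEN conjunct2, THEN conjunct2, THEN conjunct2, THEN conjunct2, THEN conjunct2, THEN conjunct2, THEN conjunct2, THEN conjunct2, THEN conjunct1] by blast
lemma BN_addL[simp]: "actBN R (b + b') n = actBN R b n + actBN R b' n" using G[THEN conjunct2, THEN conjunct2, THEN conjunct2, THEN conjunct2, THEN conjunct2, THEN conjunct2, THEN conjunct2, THEN conjunct2, THEN conjunct2, THEN conjunct1] by blast
lemma BN_addR[simp]: "actBN R b (n + n') = actBN R b n + actBN R b n'" using G[THEN conjunct2, THEN conjunct2, THEN conjunct2, THEN conjunct2, THEN conjunct2, THEN conjunct2, THEN conjunct2, THEN conjunct2, THEN conjunct2, THEN conjunct2, THEN conjunct1] by blast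
lemma BN_mult[simp]: "actBN R (b * b') n = actBN R b (actBN R b' n)" using G[THEN conjunct2, THEN conjunct2, THEN conjunct2, THEN conjunct2, THEN conjunct2, THEN conjunct2, THEN conjunct2, THEN conjunct2, THEN conjunct2, THEN conjunct2, THEN conjunct2, THEN conjunct1] by blast
lemma BN_one[simp]: "actBN R 1 n = n" using G[THEN conjunct2, THEN conjunct2, THEN conjunct2, THEN conjunct2, THEN conjunct2, THEN conjunct2, THEN conjunct2, THEN conjunct2, THEN conjunct2, THEN conjunct2, THEN conjunct2, THEN conjunct2, THEN conjunct1] by blast
lemma NA_addR[simp]: "actNA R n (a + a') = actNA R n a + actNA R n a'" using G[THEN conjunct2, THEN conjunct2, THEN conjunct2, THEN conjunct2, THEN conjunct2, THEN conjunct2, THEN conjunct2, THEN conjunct2, THEN conjunct2, THEN conjunct2, THEN conjunct2, THEN conjunct2, THEN conjunct2, THEN conjunct1] by blast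
lemma NA_addL[simp]: "actNA R (n + n') a = actNA R n a + actNA R n' a" using G[THEN conjunct2, THEN conjunct2, THEN conjunct2, THEN conjunct2, THEN conjunct2, THEN conjunct2, THEN conjunct2, THEN conjunct2, THEN conjunct2, THEN conjunct2, THEN conjunct2, THEN conjunct2, THEN conjunct2, THEN conjunct2, THEN conjunct1] by blast
lemma NA_mult[simp]: "actNA R n (a * a') = actNA R (actNA R n a) a'" using G[THEN conjunct2, THEN conjunct2, THEN conjunct2, THEN conjunct2, THEN conjunct2, THEN conjunct2, THEN conjunct2, THEN conjunct2, THEN conjunct2, THEN conjunct2, THEN conjunct2, THEN conjunct2, THEN conjunct2, THEN conjunct2, THEN conjunct2, THEN conjunct1] by blast
lemma NA_one[simp]: "actNA R n 1 = n" using G[THEN conjunct2, THEN conjunct2, THEN conjunct2, THEN conjunct2, THEN conjunct2, THEN conjunct2, THEN conjunct2, THEN conjunct2, THEN conjunct2, THEN conjunct2, THEN conjunct2, THEN conjunct2, THEN conjunct2, THEN conjunct2, THEN conjunct2, THEN conjunct2, THEN conjunct1] by blast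
lemma BNA[simp]: "actBN R b (actNA R n a) = actNA R (actBN R b n) a" using G[THEN conjunct2, THEN conjunct2, THEN conjunct2, THEN conjunct2, THEN conjunct2, THEN conjunct2, THEN conjunct2, THEN conjunct2, THEN conjunct2, THEN conjunct2, THEN conjunct2, THEN conjunct2, THEN conjunct2, THEN conjunct2, THEN conjunct2, THEN conjunct2, THEN conjunct2, THEN conjunct1] by blast
lemma faithA: "(\<And>m. actAM R a m = 0) \<Longrightarrow> a = 0" using G[THEN conjunct2, THEN conjunct2, THEN conjunct2, THEN conjunct2, THEN conjunct2, THEN conjunct2, THEN conjunct2, THEN conjunct2, THEN conjunct2, THEN conjunct2, THEN conjunct2, THEN conjunct2, THEN conjunct2, THEN conjunct2, THEN conjunct2, THEN conjunct2, THEN conjunct2, THEN conjunct2, THEN conjunct1] by blast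
lemma faithB: "(\<And>m. actMB R m b = 0) \<Longrightarrow> b = 0" using G[THEN conjunct2, THEN conjunct2, THEN conjunct2, THEN conjunct2, THEN conjunct2, THEN conjunct2, THEN conjunct2, THEN conjunct2, THEN conjunct2, THEN conjunct2, THEN conjunct2, THEN conjunct2, THEN conjunct2, THEN conjunct2, THEN conjunct2, THEN conjunct2, THEN conjunct2, THEN conjunct2, THEN conjunct2, THEN conjunct1] by blast
lemma sig_addL[simp]: "sig R (m + m') n = sig R m n + sig R m' n" using G[THEN conjunct2, THEN conjunct2, THEN conjunct2, THEN conjunct2, THEN conjunct2, THEN conjunct2, THEN conjunct2, THEN conjunct2, THEN conjunct2, THEN conjunct2, THEN conjunct2, THEN conjunct2, THEN conjunct2, THEN conjunct2, THEN conjunct2, THEN conjunct2, THEN conjunct2, THEN conjunct2, THEN conjunct2, THEN conjunct2, THEN conjunct1] by blast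
lemma sig_addR[simp]: "sig R m (n + n') = sig R m n + sig R m n'" using G[THEN conjunct2, THEN conjunct2, THEN conjunct2, THEN conjunct2, THEN conjunct2, THEN conjunct2, THEN conjunct2, THEN conjunct2, THEN conjunct2, THEN conjunct2, THEN conjunct2, THEN conjunct2, THEN conjunct2, THEN conjunct2, THEN conjunct2, THEN conjunct2, THEN conjunct2, THEN conjunct2, THEN conjunct2, THEN conjunct2, THEN conjunct2, THEN conjunct1] by blast
lemma sig_MB[simp]: "sig R (actMB R m b) n = sig R m (actBN R b n)" using G[THEN conjunct2, THEN conjunct2, THEN conjunct2, THEN conjunct2, THEN conjunct2, THEN conjunct2, THEN conjunct2, THEN conjunct2, THEN conjunct2, THEN conjunct2, THEN conjunct2, THEN conjunct2, THEN conjunct2, THEN conjunct2, THEN conjunct2, THEN conjunct2, THEN conjunct2, THEN conjunct2, THEN conjunct2, THEN conjunct2, THEN conjunct2, THEN conjunct2, THEN conjunct1] by blast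
lemma sig_AM[simp]: "sig R (actAM R a m) n = a * sig R m n" using G[THEN conjunct2, THEN conjunct2, THEN conjunct2, THEN conjunct2, THEN conjunct2, THEN conjunct2, THEN conjunct2, THEN conjunct2, THEN conjunct2, THEN conjunct2, THEN conjunct2, THEN conjunct2, THEN conjunct2, THEN conjunct2, THEN conjunct2, THEN conjunct2, THEN conjunct2, THEN conjunct2, THEN conjunct2, THEN conjunct2, THEN conjunct2, THEN conjunct2, THEN conjunct2, THEN conjunct1] by blast
lemma sig_NA[simp]: "sig R m (actNA R n a) = sig R m n * a" using G[THEN conjunct2, THEN conjunct2, THEN conjunct2, THEN conjunct2, THEN conjunct2, THEN conjunct2, THEN conjunct2, THEN conjunct2, THEN conjunct2, THEN conjunct2, THEN conjunct2, THEN conjunct2, THEN conjunct2, THEN conjunct2, THEN conjunct2, THEN conjunct2, THEN conjunct2, THEN conjunct2, THEN conjunct2, THEN conjunct2, THEN conjunct2, THEN conjunct2, THEN conjunct2, THEN conjunct2, THEN conjunct1] by blast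
lemma rho_addL[simp]: "rho R (n + n') m = rho R n m + rho R n' m" using G[THEN conjunct2, THEN conjunct2, THEN conjunct2, THEN conjunct2, THEN conjunct2, THEN conjunct2, THEN conjunct2, THEN conjunct2, THEN conjunct2, THEN conjunct2, THEN conjunct2, THEN conjunct2, THEN conjunct2, THEN conjunct2, THEN conjunct2, THEN conjunct2, THEN conjunct2, THEN conjunct2, THEN conjunct2, THEN conjunct2, THEN conjunct2, THEN conjunct2, THEN conjunct2, THEN conjunct2, THEN conjunct2, THEN conjunct1] by blast
lemma rho_addR[simp]: "rho R n (m + m') = rho R n m + rho R n m'" using G[THEN conjunct2, THEN conjunct2, THEN conjunct2, THEN conjunct2, THEN conjunct2, THEN conjunct2, THEN conjunct2, THEN conjunct2, THEN conjunct2, THEN conjunct2, THEN conjunct2, THEN conjunct2, THEN conjunct2, THEN conjunct2, THEN conjunct2, THEN conjunct2, THEN conjunct2, THEN conjunct2, THEN conjunct2, THEN conjunct2, THEN conjunct2, THEN conjunct2, THEN conjunct2, THEN conjunct2, THEN conjunct2, THEN conjunct2, THEN conjunct1] by blast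
lemma rho_NA[simp]: "rho R (actNA R n a) m = rho R n (actAM R a m)" using G[THEN conjunct2, THEN conjunct2, THEN conjunct2, THEN conjunct2, THEN conjunct2, THEN conjunct2, THEN conjunct2, THEN conjunct2, THEN conjunct2, THEN conjunct2, THEN conjunct2, THEN conjunct2, THEN conjunct2, THEN conjunct2, THEN conjunct2, THEN conjunct2, THEN conjunct2, THEN conjunct2, THEN conjunct2, THEN conjunct2, THEN conjunct2, THEN conjunct2, THEN conjunct2, THEN conjunct2, THEN conjunct2, THEN conjunct2, THEN conjunct2, THEN conjunct1] by blast
lemma rho_BN[simp]: "rho R (actBN R b n) m = b * rho R n m" using G[THEN conjunct2, THEN conjunct2, THEN conjunct2, THEN conjunct2, THEN conjunct2, THEN conjunct2, THEN conjunct2, THEN conjunct2, THEN conjunct2, THEN conjunct2, THEN conjunct2, THEN conjunct2, THEN conjunct2, THEN conjunct2, THEN conjunct2, THEN conjunct2, THEN conjunct2, THEN conjunct2, THEN conjunct2, THEN conjunct2, THEN conjunct2, THEN conjunct2, THEN conjunct2, THEN conjunct2, THEN conjunct2, THEN conjunct2, THEN conjunct2, THEN conjunct2, THEN conjunct1] by blast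
lemma rho_MB[simp]: "rho R n (actMB R m b) = rho R n m * b" using G[THEN conjunct2, THEN conjunct2, THEN conjunct2, THEN conjunct2, THEN conjunct2, THEN conjunct2, THEN conjunct2, THEN conjunct2, THEN conjunct2, THEN conjunct2, THEN conjunct2, THEN conjunct2, THEN conjunct2, THEN conjunct2, THEN conjunct2, THEN conjunct2, THEN conjunct2, THEN conjunct2, THEN conjunct2, THEN conjunct2, THEN conjunct2, THEN conjunct2, THEN conjunct2, THEN conjunct2, THEN conjunct2, THEN conjunct2, THEN conjunct2, THEN conjunct2, THEN conjunct2, THEN conjunct1] by blast
lemma bal1[simp]: "actAM R (sig R m n) m' = actMB R m (rho R n m')" using G[THEN conjunct2, THEN conjunct2, THEN conjunct2, THEN conjunct2, THEN conjunct2, THEN conjunct2, THEN conjunct2, THEN conjunct2, THEN conjunct2, THEN conjunct2, THEN conjunct2, THEN conjunct2, THEN conjunct2, THEN conjunct2, THEN conjunct2, THEN conjunct2, THEN conjunct2, THEN conjunct2, THEN conjunct2, THEN conjunct2, THEN conjunct2, THEN conjunct2, THEN conjunct2, THEN conjunct2, THEN conjunct2, THEN conjunct2, THEN conjunct2, THEN conjunct2, THEN conjunct2, THEN conjunct2, THEN conjunct1] by blast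
lemma bal2[simp]: "actBN R (rho R n m) n' = actNA R n (sig R m n')" using G[THEN conjunct2, THEN conjunct2, THEN conjunct2, THEN conjunct2, THEN conjunct2, THEN conjunct2, THEN conjunct2, THEN conjunct2, THEN conjunct2, THEN conjunct2, THEN conjunct2, THEN conjunct2, THEN conjunct2, THEN conjunct2, THEN conjunct2, THEN conjunct2, THEN conjunct2, THEN conjunct2, THEN conjunct2, THEN conjunct2, THEN conjunct2, THEN conjunct2, THEN conjunct2, THEN conjunct2, THEN conjunct2, THEN conjunct2, THEN conjunct2, THEN conjunct2, THEN conjunct2, THEN conjunct2, THEN conjunct2] by blast

lemmas AMz[simp] = addhom[where f="actAM R a" for a, OF AM_addR]
lemmas AMz'[simp] = addhom[where f="\<lambda>a. actAM R a m" for m, OF AM_addL, simplified]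
lemmas MBz[simp] = addhom[where f="actMB R m" for m, OF MB_addR]
lemmas MBz'[simp] = addhom[where f="\<lambda>m. actMB R m b" for b, OF MB_addL, simplified]
lemmas BNz[simp] = addhom[where f="actBN R b" for b, OF BN_addR]
lemmas BNz'[simp] = addhom[where f="\<lambda>b. actBN R b n" for n, OF BN_addL, simplified]
lemmas NAz[simp] = addhom[where f="actNA R n" for n, OF NA_addR]
lemmas NAz'[simp] = addhom[where f="\<lambda>n. actNA R n a" for a, OF NA_addL, simplified]
lemmas sigz[simp] = addhom[where f="sig R m" for m, OF sig_addR]
lemmas sigz'[simp] = addhom[where f="\<lambda>m. sig R m n" for n, OF sig_addL, simplified]
lemmas rhoz[simp] = addhom[where f="rho R n" for n, OF rho_addR]
lemmas rhoz'[simp] = addhom[where f="\<lambda>n. rho R n m" for m, OF rho_addL, simplified]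

end


context gmc begin
lemma mult_add_L: "gm_mult R (X + Y) Z = gm_mult R X Z + gm_mult R Y Z"
  by (cases X; cases Y; cases Z) (simp add: algebra_simps)
lemma mult_add_R: "gm_mult R Z (X + Y) = gm_mult R Z X + gm_mult R Z Y"
  by (cases X; cases Y; cases Z) (simp add: algebra_simps)
lemma mult_assoc: "gm_mult R (gm_mult R X Y) Z = gm_mult R X (gm_mult R Y Z)"
  by (cases X; cases Y; cases Z) (simp add: algebra_simps)

lemmas mL = addhom[where f="\<lambda>X. gm_mult R X Z" for Z, OF mult_add_L, simplified]
lemmas mR = addhom[where f="\<lambda>X. gm_mult R Z X" for Z, OF mult_add_R, simplified]
lemma mult_one_L: "gm_mult R gm_one X = X" by (cases X) (simp add: gm_one_def)
lemma mult_one_R: "gm_mult R X gm_one = X" by (cases X) (simp add: gm_one_def)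
end



locale psi = gmc R for R :: "('a::ring_1, 'm::ab_group_add, 'n::ab_group_add, 'b::ring_1) gmr" +
  fixes \<psi> :: "'a \<times> 'm \<times> 'n \<times> 'b \<Rightarrow> 'a \<times> 'm \<times> 'n \<times> 'b"
    and d1 :: 'a and d2 :: 'b
  assumes add: "additive_map \<psi>"
    and PP: "condition_P R \<psi>"
    and tA: "two_torsion_free TYPE('a)"
    and tB: "two_torsion_free TYPE('b)"
    and nP: "\<psi> (1,0,0,0) = (d1,0,0,0)"
    and nQ: "\<psi> (0,0,0,1) = (0,0,0,d2)"
begin

lemma tA2: "(x::'a) + x = 0 \<Longrightarrow> x = 0" using tA unfolding two_torsion_free_def by blast
lemma tB2: "(x::'b) + x = 0 \<Longrightarrow> x = 0" using tB unfolding two_torsion_free_def by blast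
lemma psi_add: "\<psi> (x + y) = \<psi> x + \<psi> y" using add unfolding additive_map_def by blast
lemma Pi: "gm_mult R U V = 0 \<Longrightarrow> gm_mult R V U = 0 \<Longrightarrow> gm_jordan R (\<psi> U) V + gm_jordan R U (\<psi> V) = 0"
  using PP unfolding condition_P_def by blast

definition "A1 a = fst (\<psi> (a,0,0,0))"
definition "A2 a = fst (snd (\<psi> (a,0,0,0)))"
definition "A3 a = fst (snd (snd (\<psi> (a,0,0,0))))"
definition "A4 a = snd (snd (snd (\<psi> (a,0,0,0))))"
lemma psi_A: "\<psi> (a,0,0,0) = (A1 a, A2 a, A3 a, A4 a)" by (simp add: A1_def A2_def A3_def A4_def)
lemma A_add: "\<psi> ((x+y),0,0,0) = \<psi> (x,0,0,0) + \<psi> (y,0,0,0)" using psi_add[of "(x,0,0,0)" "(y,0,0,0)"] by simp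
lemma A1_add: "A1 (x+y) = A1 x + A1 y" unfolding A1_def A_add by simp
lemmas A1z[simp] = addhom[of A1, OF A1_add]
lemma A2_add: "A2 (x+y) = A2 x + A2 y" unfolding A2_def A_add by simp
lemmas A2z[simp] = addhom[of A2, OF A2_add]
lemma A3_add: "A3 (x+y) = A3 x + A3 y" unfolding A3_def A_add by simp
lemmas A3z[simp] = addhom[of A3, OF A3_add]
lemma A4_add: "A4 (x+y) = A4 x + A4 y" unfolding A4_def A_add by simp
lemmas A4z[simp] = addhom[of A4, OF A4_add]
definition "M1 m = fst (\<psi> (0,m,0,0))"
definition "M2 m = fst (snd (\<psi> (0,m,0,0)))"
definition "M3 m = fst (snd (snd (\<psi> (0,m,0,0))))"
definition "M4 m = snd (snd (snd (\<psi> (0,m,0,0))))"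
lemma psi_M: "\<psi> (0,m,0,0) = (M1 m, M2 m, M3 m, M4 m)" by (simp add: M1_def M2_def M3_def M4_def)
lemma M_add: "\<psi> (0,(x+y),0,0) = \<psi> (0,x,0,0) + \<psi> (0,y,0,0)" using psi_add[of "(0,x,0,0)" "(0,y,0,0)"] by simp
lemma M1_add: "M1 (x+y) = M1 x + M1 y" unfolding M1_def M_add by simp
lemmas M1z[simp] = addhom[of M1, OF M1_add]
lemma M2_add: "M2 (x+y) = M2 x + M2 y" unfolding M2_def M_add by simp
lemmas M2z[simp] = addhom[of M2, OF M2_add]
lemma M3_add: "M3 (x+y) = M3 x + M3 y" unfolding M3_def M_add by simp
lemmas M3z[simp] = addhom[of M3, OF M3_add]
lemma M4_add: "M4 (x+y) = M4 x + M4 y" unfolding M4_def M_add by simp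
lemmas M4z[simp] = addhom[of M4, OF M4_add]
definition "N1 n = fst (\<psi> (0,0,n,0))"
definition "N2 n = fst (snd (\<psi> (0,0,n,0)))"
definition "N3 n = fst (snd (snd (\<psi> (0,0,n,0))))"
definition "N4 n = snd (snd (snd (\<psi> (0,0,n,0))))"
lemma psi_N: "\<psi> (0,0,n,0) = (N1 n, N2 n, N3 n, N4 n)" by (simp add: N1_def N2_def N3_def N4_def)
lemma N_add: "\<psi> (0,0,(x+y),0) = \<psi> (0,0,x,0) + \<psi> (0,0,y,0)" using psi_add[of "(0,0,x,0)" "(0,0,y,0)"] by simp
lemma N1_add: "N1 (x+y) = N1 x + N1 y" unfolding N1_def N_add by simp
lemmas N1z[simp] = addhom[of N1, OF N1_add]
lemma N2_add: "N2 (x+y) = N2 x + N2 y" unfolding N2_def N_add by simp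
lemmas N2z[simp] = addhom[of N2, OF N2_add]
lemma N3_add: "N3 (x+y) = N3 x + N3 y" unfolding N3_def N_add by simp
lemmas N3z[simp] = addhom[of N3, OF N3_add]
lemma N4_add: "N4 (x+y) = N4 x + N4 y" unfolding N4_def N_add by simp
lemmas N4z[simp] = addhom[of N4, OF N4_add]
definition "B1 b = fst (\<psi> (0,0,0,b))"
definition "B2 b = fst (snd (\<psi> (0,0,0,b)))"
definition "B3 b = fst (snd (snd (\<psi> (0,0,0,b))))"
definition "B4 b = snd (snd (snd (\<psi> (0,0,0,b))))"
lemma psi_B: "\<psi> (0,0,0,b) = (B1 b, B2 b, B3 b, B4 b)" by (simp add: B1_def B2_def B3_def B4_def)
lemma B_add: "\<psi> (0,0,0,(x+y)) = \<psi> (0,0,0,x) + \<psi> (0,0,0,y)" using psi_add[of "(0,0,0,x)" "(0,0,0,y)"] by simp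
lemma B1_add: "B1 (x+y) = B1 x + B1 y" unfolding B1_def B_add by simp
lemmas B1z[simp] = addhom[of B1, OF B1_add]
lemma B2_add: "B2 (x+y) = B2 x + B2 y" unfolding B2_def B_add by simp
lemmas B2z[simp] = addhom[of B2, OF B2_add]
lemma B3_add: "B3 (x+y) = B3 x + B3 y" unfolding B3_def B_add by simp
lemmas B3z[simp] = addhom[of B3, OF B3_add]
lemma B4_add: "B4 (x+y) = B4 x + B4 y" unfolding B4_def B_add by simp
lemmas B4z[simp] = addhom[of B4, OF B4_add]

lemma psi_split: "\<psi> (a,m,n,b) = (A1 a + M1 m + N1 n + B1 b, A2 a + M2 m + N2 n + B2 b, A3 a + M3 m + N3 n + B3 b, A4 a + M4 m + N4 n + B4 b)"
proof -
  have "(a,m,n,b) = (a,0,0,0) + (0,m,0,0) + ((0,0,n,0) + (0,0,0,b))" by simp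
  then have "\<psi> (a,m,n,b) = \<psi> (a,0,0,0) + \<psi> (0,m,0,0) + (\<psi> (0,0,n,0) + \<psi> (0,0,0,b))" by (simp only: psi_add)
  then show ?thesis by (simp add: psi_A psi_M psi_N psi_B)
qed

lemma P1: "A1 1 = d1" "A2 1 = 0" "A3 1 = 0" "A4 1 = 0"
  using nP by (simp_all add: psi_A)
lemma Q1: "B1 1 = 0" "B2 1 = 0" "B3 1 = 0" "B4 1 = d2"
  using nQ by (simp_all add: psi_B)

lemma pair1:
  "a * B1 b + B1 b * a = 0" "actMB R (A2 a) b + actAM R a (B2 b) = 0"
  "actBN R b (A3 a) + actNA R (B3 b) a = 0" "A4 a * b + b * A4 a = 0"
proof -
  have h: "gm_jordan R (\<psi> (a,0,0,0)) (0,0,0,b) + gm_jordan R (a,0,0,0) (\<psi> (0,0,0,b)) = 0"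
    by (rule Pi) (simp_all add: zero_prod_def)
  show "a * B1 b + B1 b * a = 0" "actMB R (A2 a) b + actAM R a (B2 b) = 0"
    "actBN R b (A3 a) + actNA R (B3 b) a = 0" "A4 a * b + b * A4 a = 0"
    using h by (simp_all add: gm_jordan_def zero_prod_def psi_A psi_B algebra_simps)
qed

lemma B1_0[simp]: "B1 b = 0" using tA2[of "B1 b"] pair1(1)[of 1 b] by simp

lemma A4_0[simp]: "A4 a = 0" using tB2[of "A4 a"] pair1(4)[of a 1] by simp
lemma B2_0[simp]: "B2 b = 0" using pair1(2)[of 1 b] by (simp add: P1)
lemma A2_0[simp]: "A2 a = 0" using pair1(2)[of a 1] by simp
lemma B3_0[simp]: "B3 b = 0" using pair1(3)[where a=1 and b=b] by (simp add: P1)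
lemma A3_0[simp]: "A3 a = 0" using pair1(3)[where a=a and b=1] by simp


lemma pair2: "sig R m (M3 m) = 0" "rho R (M3 m) m = 0"
proof -
  have h: "gm_jordan R (\<psi> (0,m,0,0)) (0,m,0,0) + gm_jordan R (0,m,0,0) (\<psi> (0,m,0,0)) = 0"
    by (rule Pi) (simp_all add: zero_prod_def)
  have "sig R m (M3 m) + sig R m (M3 m) = 0" "rho R (M3 m) m + rho R (M3 m) m = 0"
    using h by (simp_all add: gm_jordan_def zero_prod_def psi_M algebra_simps)
  then show "sig R m (M3 m) = 0" "rho R (M3 m) m = 0" using tA2[of "sig R m (M3 m)"] tB2[of "rho R (M3 m) m"] by auto
qed

lemma pair2N: "sig R (N2 n) n = 0" "rho R n (N2 n) = 0"
proof -
  have h: "gm_jordan R (\<psi> (0,0,n,0)) (0,0,n,0) + gm_jordan R (0,0,n,0) (\<psi> (0,0,n,0)) = 0"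
    by (rule Pi) (simp_all add: zero_prod_def)
  have "sig R (N2 n) n + sig R (N2 n) n = 0" "rho R n (N2 n) + rho R n (N2 n) = 0"
    using h by (simp_all add: gm_jordan_def zero_prod_def psi_N algebra_simps)
  then show "sig R (N2 n) n = 0" "rho R n (N2 n) = 0" using tA2[of "sig R (N2 n) n"] tB2[of "rho R n (N2 n)"] by auto
qed

lemma famF: "gm_jordan R (\<psi> (a, actAM R a m, 0, 0)) (0, - actMB R m b, 0, b)
   + gm_jordan R (a, actAM R a m, 0, 0) (\<psi> (0, - actMB R m b, 0, b)) = 0"
  by (rule Pi) (simp_all add: zero_prod_def)

lemma famN: "gm_jordan R (\<psi> (a, 0, actNA R n a, 0)) (0, 0, - actBN R b n, b)
   + gm_jordan R (a, 0, actNA R n a, 0) (\<psi> (0, 0, - actBN R b n, b)) = 0"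
  by (rule Pi) (simp_all add: zero_prod_def)


lemma M1_0[simp]: "M1 m = 0"
proof -
  have "fst (gm_jordan R (\<psi> (1, actAM R 1 m, 0, 0)) (0, - actMB R m 1, 0, 1)
   + gm_jordan R (1, actAM R 1 m, 0, 0) (\<psi> (0, - actMB R m 1, 0, 1))) = - (M1 m + M1 m + (sig R m (M3 m) + sig R m (M3 m)))"
    by (simp add: gm_jordan_def psi_split algebra_simps)
  moreover have "fst (gm_jordan R (\<psi> (1, actAM R 1 m, 0, 0)) (0, - actMB R m 1, 0, 1)
   + gm_jordan R (1, actAM R 1 m, 0, 0) (\<psi> (0, - actMB R m 1, 0, 1))) = 0" by (simp only: famF fst_zero)
  ultimately have "M1 m + M1 m = 0" using pair2 by (simp add: add_eq_0_iff)
  then show ?thesis using tA2 by blast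
qed

lemma M4_0[simp]: "M4 m = 0"
proof -
  have "M4 m + M4 m - rho R (M3 m) m - rho R (M3 m) m = 0"
    using famF[of 1 m 1] by (simp add: gm_jordan_def zero_prod_def psi_split algebra_simps)
  then show ?thesis using pair2 tB2[of "M4 m"] by (simp add: algebra_simps)
qed

lemma N1_0[simp]: "N1 n = 0"
proof -
  have "fst (gm_jordan R (\<psi> (1, 0, actNA R n 1, 0)) (0, 0, - actBN R 1 n, 1)
   + gm_jordan R (1, 0, actNA R n 1, 0) (\<psi> (0, 0, - actBN R 1 n, 1))) = - (N1 n + N1 n + (sig R (N2 n) n + sig R (N2 n) n))"
    by (simp add: gm_jordan_def psi_split algebra_simps)
  moreover have "fst (gm_jordan R (\<psi> (1, 0, actNA R n 1, 0)) (0, 0, - actBN R 1 n, 1)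
   + gm_jordan R (1, 0, actNA R n 1, 0) (\<psi> (0, 0, - actBN R 1 n, 1))) = 0" by (simp only: famN fst_zero)
  ultimately have "N1 n + N1 n = 0" using pair2N by (simp add: add_eq_0_iff)
  then show ?thesis using tA2 by blast
qed

lemma N4_0[simp]: "N4 n = 0"
proof -
  have "N4 n + N4 n - rho R n (N2 n) - rho R n (N2 n) = 0"
    using famN[of 1 n 1] by (simp add: gm_jordan_def zero_prod_def psi_split algebra_simps)
  then show ?thesis using pair2N tB2[of "N4 n"] by (simp add: algebra_simps)
qed

lemma famF_M: "- actMB R (actAM R (A1 a) m) b + actMB R (M2 (actAM R a m)) b
   - actAM R a (M2 (actMB R m b)) + actMB R (actAM R a m) (B4 b) = 0"
  using famF[of a m b] by (simp add: gm_jordan_def zero_prod_def psi_split algebra_simps)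

lemma famF_N: "actBN R b (M3 (actAM R a m)) - actNA R (M3 (actMB R m b)) a = 0"
  using famF[of a m b] by (simp add: gm_jordan_def zero_prod_def psi_split algebra_simps)

lemma famN_M: "actMB R (N2 (actNA R n a)) b - actAM R a (N2 (actBN R b n)) = 0"
  using famN[of a n b] by (simp add: gm_jordan_def zero_prod_def psi_split algebra_simps)

lemma famN_N: "- actNA R (actBN R b n) (A1 a) + actBN R b (N3 (actNA R n a))
   - actNA R (N3 (actBN R b n)) a + actBN R (B4 b) (actNA R n a) = 0"
  using famN[of a n b] by (simp add: gm_jordan_def zero_prod_def psi_split algebra_simps)

lemma M2a: "M2 (actAM R a m) = actAM R (A1 a) m + actAM R a (M2 m) - actMB R (actAM R a m) d2"
  using famF_M[where a=a and m=m and b=1] by (simp add: Q1 algebra_simps)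
lemma M2b: "M2 (actMB R m b) = actMB R (M2 m) b + actMB R m (B4 b) - actMB R (actAM R d1 m) b"
  using famF_M[where a=1 and m=m and b=b] by (simp add: P1 algebra_simps)
lemma dm: "actAM R d1 m = actMB R m d2"
  using famF_M[where a=1 and m=m and b=1] by (simp add: P1 Q1 algebra_simps)
lemma M3a: "M3 (actAM R a m) = actNA R (M3 m) a"
  using famF_N[where a=a and m=m and b=1] by simp
lemma M3b: "M3 (actMB R m b) = actBN R b (M3 m)"
  using famF_N[where a=1 and m=m and b=b] by simp
lemma N2a: "N2 (actNA R n a) = actAM R a (N2 n)"
  using famN_M[where a=a and n=n and b=1] by simp
lemma N2b: "N2 (actBN R b n) = actMB R (N2 n) b"
  using famN_M[where a=1 and n=n and b=b] by simp
lemma N3a: "N3 (actNA R n a) = actNA R (N3 n) a + actNA R n (A1 a) - actNA R (actBN R d2 n) a"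
  using famN_N[where a=a and n=n and b=1] by (simp add: Q1 algebra_simps)
lemma N3b: "N3 (actBN R b n) = actBN R b (N3 n) + actBN R (B4 b) n - actNA R (actBN R b n) d1"
  using famN_N[where a=1 and n=n and b=b] by (simp add: P1 algebra_simps)
lemma dn: "actNA R n d1 = actBN R d2 n"
  using famN_N[where a=1 and n=n and b=1] by (simp add: P1 Q1 algebra_simps)

lemma d1c: "d1 * a = a * d1"
proof -
  have "actAM R (d1 * a - a * d1) m = 0" for m by (simp add: dm)
  then show ?thesis using faithA by (metis eq_iff_diff_eq_0)
qed
lemma d2c: "d2 * b = b * d2"
proof -
  have "actMB R m (d2 * b - b * d2) = 0" for m by (simp add: dm[symmetric])
  then show ?thesis using faithB by (metis eq_iff_diff_eq_0)
qed

end



locale psi0 = psi R \<psi> 0 0 for R :: "('a::ring_1, 'm::ab_group_add, 'n::ab_group_add, 'b::ring_1) gmr"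
  and \<psi> :: "'a \<times> 'm \<times> 'n \<times> 'b \<Rightarrow> 'a \<times> 'm \<times> 'n \<times> 'b"
begin

lemma M2a0[simp]: "M2 (actAM R a m) = actAM R (A1 a) m + actAM R a (M2 m)" using M2a by simp
lemma M2b0[simp]: "M2 (actMB R m b) = actMB R (M2 m) b + actMB R m (B4 b)" using M2b by simp
lemma N3a0[simp]: "N3 (actNA R n a) = actNA R (N3 n) a + actNA R n (A1 a)" using N3a by simp
lemma N3b0[simp]: "N3 (actBN R b n) = actBN R b (N3 n) + actBN R (B4 b) n" using N3b by simp
lemmas [simp] = M3a M3b N2a N2b pair2 pair2N

lemma A1_mult[simp]: "A1 (a * a') = A1 a * a' + a * A1 a'"
proof -
  have "actAM R (A1 (a*a') - (A1 a * a' + a * A1 a')) m = 0" for m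
  proof -
    have e: "M2 (actAM R (a*a') m) = actAM R (A1 (a*a')) m + actAM R (a*a') (M2 m)" by (rule M2a0)
    show ?thesis using e by (simp add: algebra_simps)
  qed
  then show ?thesis using faithA by (metis eq_iff_diff_eq_0)
qed

lemma B4_mult[simp]: "B4 (b * b') = B4 b * b' + b * B4 b'"
proof -
  have "actMB R m (B4 (b*b') - (B4 b * b' + b * B4 b')) = 0" for m
  proof -
    have e: "M2 (actMB R m (b*b')) = actMB R (M2 m) (b*b') + actMB R m (B4 (b*b'))" by (rule M2b0)
    show ?thesis using e by (simp add: algebra_simps)
  qed
  then show ?thesis using faithB by (metis eq_iff_diff_eq_0)
qed

lemma psiI: "\<psi> gm_one = 0"
  by (simp add: gm_one_def psi_split P1 Q1 zero_prod_def)

lemma idem: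
  assumes e: "gm_mult R E E = E"
  shows "fst (\<psi> E) = fst (gm_mult R (\<psi> E) E + gm_mult R E (\<psi> E))"
    "snd (snd (snd (\<psi> E))) = snd (snd (snd (gm_mult R (\<psi> E) E + gm_mult R E (\<psi> E))))"
proof -
  define Y where "Y = \<psi> E"
  define Z where "Z = gm_mult R Y E + gm_mult R E Y"
  have u: "gm_mult R E (gm_one - E) = 0" "gm_mult R (gm_one - E) E = 0"
    using e by (simp_all add: mR mL mult_one_L mult_one_R)
  have "gm_jordan R (\<psi> E) (gm_one - E) + gm_jordan R E (\<psi> (gm_one - E)) = 0"
    by (rule Pi) (use u in auto)
  moreover have "\<psi> (gm_one - E) = - Y"
    using add unfolding additive_map_def Y_def
    by (metis addhom(3) psiI diff_0)
  ultimately have "gm_jordan R Y (gm_one - E) + gm_jordan R E (- Y) = 0" by (simp add: Y_def)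
  moreover have "gm_jordan R Y (gm_one - E) + gm_jordan R E (- Y) = (Y + Y) - (Z + Z)"
    by (simp add: gm_jordan_def Z_def mR mL mult_one_L mult_one_R algebra_simps)
  ultimately have z: "(Y + Y) - (Z + Z) = 0" by simp
  have "fst Y - fst Z + (fst Y - fst Z) = 0"
    using arg_cong[OF z, of fst] by (simp add: algebra_simps)
  then show "fst (\<psi> E) = fst (gm_mult R (\<psi> E) E + gm_mult R E (\<psi> E))"
    using tA2[of "fst Y - fst Z"] by (simp add: Y_def Z_def)
  have "snd (snd (snd Y)) - snd (snd (snd Z)) + (snd (snd (snd Y)) - snd (snd (snd Z))) = 0"
    using arg_cong[OF z, of "\<lambda>x. snd (snd (snd x))"] by (simp add: algebra_simps)
  then show "snd (snd (snd (\<psi> E))) = snd (snd (snd (gm_mult R (\<psi> E) E + gm_mult R E (\<psi> E))))"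
    using tB2[of "snd (snd (snd Y)) - snd (snd (snd Z))"] by (simp add: Y_def Z_def)
qed

definition "Em m n = A1 (sig R m n) - sig R (M2 m) n - sig R m (N3 n)"
definition "Fn n m = B4 (rho R n m) - rho R (N3 n) m - rho R n (M2 m)"

lemma cross_idem:
  assumes e: "gm_mult R (a,m,n,b) (a,m,n,b) = (a,m,n,b)"
  shows "Em m n = 0" "Fn n m = 0"
proof -
  have ea: "a = a * a + sig R m n" and eb: "b = rho R n m + b * b" using e by auto
  have i1: "A1 a = A1 (a * a + sig R m n)" using ea by (rule arg_cong)
  have i2: "B4 b = B4 (rho R n m + b * b)" using eb by (rule arg_cong)
  have j1: "A1 a = A1 a * a + sig R (M2 m) n + a * A1 a + sig R m (N3 n)"
    using idem(1)[OF e] by (simp add: psi_split algebra_simps)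
  have j2: "B4 b = rho R (N3 n) m + B4 b * b + rho R n (M2 m) + b * B4 b"
    using idem(2)[OF e] by (simp add: psi_split algebra_simps)
  have "A1 (a * a + sig R m n) = A1 a * a + a * A1 a + A1 (sig R m n)" by (simp add: A1_add)
  note i1' = trans[OF i1 this]
  have "B4 (rho R n m + b * b) = B4 (rho R n m) + B4 b * b + b * B4 b" by (simp add: B4_add)
  note i2' = trans[OF i2 this]
  show "Em m n = 0" using trans[OF i1'[symmetric] j1] unfolding Em_def by (simp add: algebra_simps)
  show "Fn n m = 0" using trans[OF i2'[symmetric] j2] unfolding Fn_def by (simp add: algebra_simps)
qed

lemma Em_lin: "Em m (x + y) = Em m x + Em m y" "Em m (x - y) = Em m x - Em m y" "Em (-m) n = - Em m n" "Em m (-n) = - Em m n"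
  unfolding Em_def by (simp_all add: algebra_simps A1_add N3_add)
lemma Fn_lin: "Fn (x + y) m = Fn x m + Fn y m" "Fn (x - y) m = Fn x m - Fn y m" "Fn n (-m) = - Fn n m" "Fn (-n) m = - Fn n m"
  unfolding Fn_def by (simp_all add: algebra_simps B4_add N3_add)

lemma e'_idem: "gm_mult R (1 - sig R m t, m, t - actBN R (rho R t m) t, rho R t m)
   (1 - sig R m t, m, t - actBN R (rho R t m) t, rho R t m) = (1 - sig R m t, m, t - actBN R (rho R t m) t, rho R t m)"
  by (simp add: algebra_simps)

lemma Em0: "Em m t = 0"
proof -
  have 1: "Em m (t - actBN R (rho R t m) t) = 0" by (rule cross_idem(1)[OF e'_idem])
  have 2: "Em (-m) (t - actBN R (rho R t (-m)) t) = 0" by (rule cross_idem(1)[OF e'_idem])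
  have a: "Em m t - Em m (actBN R (rho R t m) t) = 0" using 1 by (simp only: Em_lin)
  have b: "- Em m t - Em m (actBN R (rho R t m) t) = 0" using 2 by (simp add: Em_lin)
  have "Em m t + Em m t = (Em m t - Em m (actBN R (rho R t m) t)) - (- Em m t - Em m (actBN R (rho R t m) t))" by (simp add: algebra_simps)
  also have "\<dots> = 0" by (simp only: a b diff_zero)
  finally have "Em m t + Em m t = 0" .
  then show ?thesis using tA2[of "Em m t"] by simp
qed

lemma Fn0: "Fn t m = 0"
proof -
  have 1: "Fn (t - actBN R (rho R t m) t) m = 0" by (rule cross_idem(2)[OF e'_idem])
  have 2: "Fn (t - actBN R (rho R t (-m)) t) (-m) = 0" by (rule cross_idem(2)[OF e'_idem])
  have a: "Fn t m - Fn (actBN R (rho R t m) t) m = 0" using 1 by (simp only: Fn_lin)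
  have b: "- Fn t m - Fn (actBN R (rho R t m) t) m = 0" using 2 by (simp add: Fn_lin)
  have "Fn t m + Fn t m = (Fn t m - Fn (actBN R (rho R t m) t) m) - (- Fn t m - Fn (actBN R (rho R t m) t) m)" by (simp add: algebra_simps)
  also have "\<dots> = 0" by (simp only: a b diff_zero)
  finally have "Fn t m + Fn t m = 0" .
  then show ?thesis using tB2[of "Fn t m"] by simp
qed

lemma A1_sig[simp]: "A1 (sig R m n) = sig R (M2 m) n + sig R m (N3 n)"
  using Em0[of m n] unfolding Em_def by (simp add: algebra_simps)
lemma B4_rho[simp]: "B4 (rho R n m) = rho R (N3 n) m + rho R n (M2 m)"
  using Fn0[of n m] unfolding Fn_def by (simp add: algebra_simps)

lemma psi0_jd: "jordan_derivation R \<psi>"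
  unfolding jordan_derivation_def
proof (intro conjI allI)
  show "additive_map \<psi>" by (rule add)
  fix X :: "'a \<times> 'm \<times> 'n \<times> 'b"
  obtain a m n b where X: "X = (a,m,n,b)" by (cases X) auto
  show "\<psi> (gm_mult R X X) = gm_mult R (\<psi> X) X + gm_mult R X (\<psi> X)"
    unfolding X by (simp add: psi_split algebra_simps A1_add M2_add M3_add N2_add N3_add B4_add)
qed

end



context gmc begin

lemma jordan_lin: "gm_jordan R (X - Y) Z = gm_jordan R X Z - gm_jordan R Y Z"
   "gm_jordan R Z (X - Y) = gm_jordan R Z X - gm_jordan R Z Y"
  by (simp_all add: gm_jordan_def mult_add_L mult_add_R mL mR algebra_simps)

lemma P_diff:
  assumes "condition_P R f" "condition_P R g"
  shows "condition_P R (\<lambda>X. f X - g X)"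
  unfolding condition_P_def
proof (intro allI impI)
  fix U V assume uv: "gm_mult R U V = 0 \<and> gm_mult R V U = 0"
  have a: "gm_jordan R (f U) V + gm_jordan R U (f V) = 0" using assms(1) uv unfolding condition_P_def by blast
  have b: "gm_jordan R (g U) V + gm_jordan R U (g V) = 0" using assms(2) uv unfolding condition_P_def by blast
  have "gm_jordan R (f U - g U) V + gm_jordan R U (f V - g V)
      = (gm_jordan R (f U) V + gm_jordan R U (f V)) - (gm_jordan R (g U) V + gm_jordan R U (g V))"
    by (simp add: jordan_lin algebra_simps)
  then show "gm_jordan R (f U - g U) V + gm_jordan R U (f V - g V) = 0" using a b by simp
qed

lemma add_diff_map: "additive_map f \<Longrightarrow> additive_map g \<Longrightarrow> additive_map (\<lambda>X. f X - g X)"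
  unfolding additive_map_def by (simp add: algebra_simps)

lemma jd_sum:
  assumes f: "jordan_derivation R f" and g: "jordan_derivation R g"
  shows "jordan_derivation R (\<lambda>X. f X + g X)"
proof -
  have fa: "f (x + y) = f x + f y" and ga: "g (x + y) = g x + g y" for x y
    using f g unfolding jordan_derivation_def additive_map_def by blast+
  have fj: "f (gm_mult R X X) = gm_mult R (f X) X + gm_mult R X (f X)"
   and gj: "g (gm_mult R X X) = gm_mult R (g X) X + gm_mult R X (g X)" for X
    using f g unfolding jordan_derivation_def by blast+
  show ?thesis unfolding jordan_derivation_def additive_map_def
  proof (intro conjI allI)
    fix x y show "f (x + y) + g (x + y) = f x + g x + (f y + g y)" by (simp add: fa ga algebra_simps)
  next
    fix X show "f (gm_mult R X X) + g (gm_mult R X X) = gm_mult R (f X + g X) X + gm_mult R X (f X + g X)"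
      by (simp add: fj gj mult_add_L mult_add_R mL mR algebra_simps)
  qed
qed

definition "adj T X = gm_mult R T X - gm_mult R X T"

lemma adj_add: "additive_map (adj T)"
  unfolding additive_map_def
proof (intro allI)
  fix x y show "adj T (x + y) = adj T x + adj T y" unfolding adj_def by (simp add: mult_add_L mult_add_R mL mR algebra_simps)
qed

lemma adj_der: "adj T (gm_mult R X Y) = gm_mult R (adj T X) Y + gm_mult R X (adj T Y)"
  unfolding adj_def by (simp add: mult_add_L mult_add_R mL mR mult_assoc algebra_simps)

lemma adj_P: "condition_P R (adj T)"
  unfolding condition_P_def
proof (intro allI impI)
  fix U V assume uv: "gm_mult R U V = 0 \<and> gm_mult R V U = 0"
  have "gm_jordan R (adj T U) V + gm_jordan R U (adj T V) = adj T (gm_mult R U V) + adj T (gm_mult R V U)"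
    by (simp add: gm_jordan_def adj_der algebra_simps)
  also have "\<dots> = 0" using uv by (simp add: adj_def mult_add_L mult_add_R mL mR)
  finally show "gm_jordan R (adj T U) V + gm_jordan R U (adj T V) = 0" .
qed

lemma adj_jd: "jordan_derivation R (adj T)"
  unfolding jordan_derivation_def using adj_add adj_der by blast

lemma central_mult:
  assumes c: "\<And>X. gm_mult R D X = gm_mult R X D"
  shows "multiplier R (\<lambda>X. gm_mult R D X)" "condition_P R (\<lambda>X. gm_mult R D X)"
    "additive_map (\<lambda>X. gm_mult R D X)"
proof -
  show ad: "additive_map (\<lambda>X. gm_mult R D X)" unfolding additive_map_def
  proof (intro allI)
    fix x y show "gm_mult R D (x + y) = gm_mult R D x + gm_mult R D y" by (simp add: mult_add_R mR)
  qed
  show "multiplier R (\<lambda>X. gm_mult R D X)"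
    unfolding multiplier_def
  proof (intro conjI allI)
    fix X show "gm_mult R D X = gm_mult R (gm_mult R D gm_one) X" by (simp add: mult_one_R)
    show "gm_mult R D X = gm_mult R X (gm_mult R D gm_one)" by (simp add: mult_one_R c)
  qed (rule ad)
  show "condition_P R (\<lambda>X. gm_mult R D X)"
    unfolding condition_P_def
  proof (intro allI impI)
    fix U V assume uv: "gm_mult R U V = 0 \<and> gm_mult R V U = 0"
    have 1: "gm_mult R V (gm_mult R D U) = gm_mult R D (gm_mult R V U)"
      by (metis c mult_assoc)
    have 2: "gm_mult R U (gm_mult R D V) = gm_mult R D (gm_mult R U V)"
      by (metis c mult_assoc)
    have "gm_jordan R (gm_mult R D U) V + gm_jordan R U (gm_mult R D V)
       = gm_mult R D (gm_mult R U V) + gm_mult R D (gm_mult R V U) + gm_mult R D (gm_mult R U V) + gm_mult R D (gm_mult R V U)"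
      unfolding gm_jordan_def 1 2 by (simp add: mult_assoc algebra_simps)
    then show "gm_jordan R (gm_mult R D U) V + gm_jordan R U (gm_mult R D V) = 0" using uv by (simp add: mult_add_R mR)
  qed
qed

lemma PQ_pair:
  assumes P: "condition_P R f" and tA: "two_torsion_free TYPE('a)" and tB: "two_torsion_free TYPE('b)"
    and fp: "f (1,0,0,0) = (p1,p2,p3,p4)" and fq: "f (0,0,0,1) = (q1,q2,q3,q4)"
  shows "p4 = 0" "q1 = 0" "p2 + q2 = 0" "p3 + q3 = 0"
proof -
  have "gm_jordan R (f (1,0,0,0)) (0,0,0,1) + gm_jordan R (1,0,0,0) (f (0,0,0,1)) = 0"
    using P unfolding condition_P_def by (simp add: zero_prod_def)
  then have h: "q1 + q1 = 0" "p2 + q2 = 0" "p3 + q3 = 0" "p4 + p4 = 0"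
    unfolding fp fq by (simp_all add: gm_jordan_def zero_prod_def)
  show "p2 + q2 = 0" "p3 + q3 = 0" by (fact h(2)) (fact h(3))
  show "p4 = 0" using tB h(4) unfolding two_torsion_free_def by blast
  show "q1 = 0" using tA h(1) unfolding two_torsion_free_def by blast
qed

end



theorem theorem2p1:
  fixes R :: "('a::ring_1, 'm::ab_group_add, 'n::ab_group_add, 'b::ring_1) gmr"
    and \<phi> :: "'a \<times> 'm \<times> 'n \<times> 'b \<Rightarrow> 'a \<times> 'm \<times> 'n \<times> 'b"
  assumes "gen_matrix_ring R"
    and "two_torsion_free TYPE('a)"
    and "two_torsion_free TYPE('b)"
    and "additive_map \<phi>"
    and "condition_P R \<phi>"
  shows "(\<exists>\<delta> \<eta>. jordan_derivation R \<delta> \<and> multiplier R \<eta> \<and> (\<forall>X. \<phi> X = \<delta> X + \<eta> X))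
         \<and> (\<phi> gm_one = 0 \<longrightarrow> jordan_derivation R \<phi>)"
proof -
  interpret g: gmc R by unfold_locales (rule assms(1))
  obtain p1 p2 p3 p4 where fp: "\<phi> (1,0,0,0) = (p1,p2,p3,p4)" by (metis prod.exhaust)
  obtain q1 q2 q3 q4 where fq: "\<phi> (0,0,0,1) = (q1,q2,q3,q4)" by (metis prod.exhaust)
  have pq: "p4 = 0" "q1 = 0" "p2 + q2 = 0" "p3 + q3 = 0"
    using g.PQ_pair[OF assms(5) assms(2) assms(3) fp fq] by auto
  define T where "T = (0::'a, -p2, p3, 0::'b)"
  define \<psi>1 where "\<psi>1 = (\<lambda>X. \<phi> X - g.adj T X)"
  have a1: "additive_map \<psi>1" unfolding \<psi>1_def by (rule g.add_diff_map[OF assms(4) g.adj_add])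
  have P1: "condition_P R \<psi>1" unfolding \<psi>1_def by (rule g.P_diff[OF assms(5) g.adj_P])
  have n1: "\<psi>1 (1,0,0,0) = (p1,0,0,0)" using pq unfolding \<psi>1_def g.adj_def T_def fp by (simp add: zero_prod_def)
  have n2: "\<psi>1 (0,0,0,1) = (0,0,0,q4)" using pq unfolding \<psi>1_def g.adj_def T_def fq
    by (simp add: add_eq_0_iff)
  interpret I1: psi R \<psi>1 p1 q4
    by unfold_locales (fact assms(1) a1 P1 assms(2) assms(3) n1 n2)+
  define D where "D = (p1, 0::'m, 0::'n, q4)"
  have cD: "gm_mult R D X = gm_mult R X D" for X
    by (cases X) (simp add: D_def I1.d1c I1.d2c I1.dm I1.dn)
  define \<eta> where "\<eta> = (\<lambda>X. gm_mult R D X)"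
  note ce = g.central_mult[of D, OF cD, folded \<eta>_def]
  define \<psi>0 where "\<psi>0 = (\<lambda>X. \<psi>1 X - \<eta> X)"
  have a0: "additive_map \<psi>0" unfolding \<psi>0_def by (rule g.add_diff_map[OF a1 ce(3)])
  have P0: "condition_P R \<psi>0" unfolding \<psi>0_def by (rule g.P_diff[OF P1 ce(2)])
  have m1: "\<psi>0 (1,0,0,0) = (0,0,0,0)" unfolding \<psi>0_def \<eta>_def D_def n1 by (simp add: zero_prod_def)
  have m2: "\<psi>0 (0,0,0,1) = (0,0,0,0)" unfolding \<psi>0_def \<eta>_def D_def n2 by (simp add: zero_prod_def)
  interpret I0: psi0 R \<psi>0
    by unfold_locales (fact assms(1) a0 P0 assms(2) assms(3) m1 m2)+
  define \<delta> where "\<delta> = (\<lambda>X. \<psi>0 X + g.adj T X)"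
  have jd: "jordan_derivation R \<delta>" unfolding \<delta>_def by (rule g.jd_sum[OF I0.psi0_jd g.adj_jd])
  have dec: "\<phi> X = \<delta> X + \<eta> X" for X unfolding \<delta>_def \<psi>0_def \<psi>1_def by simp
  show ?thesis
  proof (intro conjI impI)
    show "\<exists>\<delta> \<eta>. jordan_derivation R \<delta> \<and> multiplier R \<eta> \<and> (\<forall>X. \<phi> X = \<delta> X + \<eta> X)"
      using jd ce(1) dec by blast
    assume z: "\<phi> gm_one = 0"
    have "\<delta> (gm_mult R gm_one gm_one) = gm_mult R (\<delta> gm_one) gm_one + gm_mult R gm_one (\<delta> gm_one)"
      using jd unfolding jordan_derivation_def by blast
    then have "\<delta> gm_one = \<delta> gm_one + \<delta> gm_one" by (simp add: g.mult_one_L g.mult_one_R)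
    then have d0: "\<delta> gm_one = 0" by simp
    have e0: "\<eta> gm_one = 0" using dec[of gm_one] z d0 by simp
    have "\<eta> X = 0" for X
    proof -
      have "\<eta> X = gm_mult R (\<eta> gm_one) X" using ce(1) unfolding multiplier_def by blast
      then show ?thesis using e0 by (simp add: g.mL)
    qed
    then have "\<phi> = \<delta>" using dec by (simp add: fun_eq_iff)
    then show "jordan_derivation R \<phi>" using jd by simp
  qed
qed


end
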